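(* Let $n,k$ be positive integers with $n\geq k$ and $n> 3(n-k)$. Then for every $C\in\mathcal{K}_k(n)$, the diagram $\beta_{n,k}(C)$ lies in $\mathcal{K}_{k-1}(n-1)$.
   Context: A linear chord diagram of size $n$ is a partition of $\{1,2,\dots,2n\}$ into blocks of size two, called chords. For a chord $c=\{s_c,e_c\}$ with $s_c<e_c$, $s_c$ is its start point, $e_c$ its end point, and its length is $e_c-s_c$. $\mathcal{K}_k(n)$ is the set of all linear chord diagrams of size $n$ in which every chord has length at least $k$. Let $M_{n,k}=\{k+1,\dots,2n-k\}$, and for a diagram $C$ of size $n$ let $S_C$ be the set of chords of $C$ with neither endpoint in $M_{n,k}$. The map $\beta_{n,k}$ is defined on $C\in\mathcal{K}_k(n)$ as follows. Let $c$ be the chord whose end point is $2n-k+1$ (the position immediately after $M_{n,k}$). Repeatedly swap the start point of $c$ with the nearest start point to its right belonging to a chord of $S_C$ (the two chords exchange these start positions), until no start point of a chord of $S_C$ lies to the right of the start point of $c$. Then remove the chord $c$ and relabel the remaining $2n-2$ points $1,\dots,2n-2$ preserving order. The result is $\beta_{n,k}(C)$, a diagram of size $n-1$. *)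

theory Defs
  imports Main
begin

type_synonym chord = "nat \<times> nat"
type_synonym diagram = "chord set"

definition is_diagram :: "nat \<Rightarrow> diagram \<Rightarrow> bool" where
  "is_diagram n C \<longleftrightarrow>
     (\<forall>c\<in>C. fst c < snd c \<and> fst c \<in> {1..2*n} \<and> snd c \<in> {1..2*n}) \<and>
     (\<forall>p\<in>{1..2*n}. \<exists>!c\<in>C. p = fst c \<or> p = snd c)"

definition K :: "nat \<Rightarrow> nat \<Rightarrow> diagram set" where
  "K k n = {C. is_diagram n C \<and> (\<forall>c\<in>C. snd c - fst c \<ge> k)}"

definition Mset :: "nat \<Rightarrow> nat \<Rightarrow> nat set" where
  "Mset n k = {k+1..2*n-k}"

text \<open>Chords of S_C (neither endpoint in M). Since the swaps only move start points,
chords are tracked through the procedure by their (unchanging) end points.\<close>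
definition S_ends :: "nat \<Rightarrow> nat \<Rightarrow> diagram \<Rightarrow> nat set" where
  "S_ends n k C = {e. \<exists>s. (s, e) \<in> C \<and> s \<notin> Mset n k \<and> e \<notin> Mset n k}"

text \<open>One swap step of the procedure applied to the current diagram D, where C0 is the
original diagram (defining S_C), and c is the chord with end point 2n-k+1.\<close>
definition swap_step :: "nat \<Rightarrow> nat \<Rightarrow> diagram \<Rightarrow> diagram \<Rightarrow> diagram" where
  "swap_step n k C0 D =
     (let e0 = 2*n - k + 1;
          s = (THE s. (s, e0) \<in> D);
          cands = {t. \<exists>e'. (t, e') \<in> D \<and> e' \<in> S_ends n k C0 \<and> s < t}
      in if cands = {} then D
         else (let t = Min cands;
                   e' = (THE e'. (t, e') \<in> D)
               in (D - {(s, e0), (t, e')}) \<union> {(t, e0), (s, e')}))"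

text \<open>The start point of c strictly increases at each effective step and stays within
{1..2n}, so 2n iterations reach the point where no further swap is possible.\<close>
definition beta :: "nat \<Rightarrow> nat \<Rightarrow> diagram \<Rightarrow> diagram" where
  "beta n k C =
     (let e0 = 2*n - k + 1;
          D = (swap_step n k C ^^ (2*n)) C;
          s = (THE s. (s, e0) \<in> D);
          r = (\<lambda>p. p - (if s < p then 1 else 0) - (if e0 < p then 1 else 0))
      in (\<lambda>(a, b). (r a, r b)) ` (D - {(s, e0)}))"

end

theory Submission imports Defs begin

lemma diag_valid:
  assumes "is_diagram n D" "(a,b) \<in> D"
  shows "a < b" "1 \<le> a" "b \<le> 2*n"
proof -
  have "\<forall>c\<in>D. fst c < snd c \<and> fst c \<in> {1..2*n} \<and> snd c \<in> {1..2*n}"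
    using assms(1) unfolding is_diagram_def by (rule conjunct1)
  from bspec[OF this assms(2)] show "a < b" "1 \<le> a" "b \<le> 2*n" by auto
qed

lemma diag_ex1:
  assumes "is_diagram n D" "p \<in> {1..2*n}"
  shows "\<exists>!c. c \<in> D \<and> (p = fst c \<or> p = snd c)"
proof -
  have "\<forall>p\<in>{1..2*n}. \<exists>!c\<in>D. p = fst c \<or> p = snd c"
    using assms(1) unfolding is_diagram_def by (rule conjunct2)
  from bspec[OF this assms(2)] show ?thesis .
qed

lemma diag_unique:
  assumes "is_diagram n D" "c1 \<in> D" "c2 \<in> D" "p = fst c1 \<or> p = snd c1" "p = fst c2 \<or> p = snd c2"
  shows "c1 = c2"
proof -
  obtain a b where ab: "c1 = (a,b)" by (cases c1)
  have "p \<in> {1..2*n}" using assms(4) diag_valid[OF assms(1), of a b] assms(2) ab by auto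
  from diag_ex1[OF assms(1) this] have "\<exists>!c. c \<in> D \<and> (p = fst c \<or> p = snd c)" .
  then show ?thesis using assms(2-5) by (metis (no_types, lifting))
qed

lemma diag_cover:
  assumes "is_diagram n D" "p \<in> {1..2*n}"
  obtains a b where "(a,b) \<in> D" "p = a \<or> p = b"
proof -
  from ex1_implies_ex[OF diag_ex1[OF assms]] obtain c where "c \<in> D" "p = fst c \<or> p = snd c" by blast
  then show ?thesis using that[of "fst c" "snd c"] by auto
qed

lemma diag_finite:
  assumes "is_diagram n D" shows "finite D"
proof -
  have "D \<subseteq> {1..2*n} \<times> {1..2*n}"
  proof
    fix c assume c: "c \<in> D"
    obtain a b where ab: "c = (a,b)" by (cases c)
    show "c \<in> {1..2*n} \<times> {1..2*n}" using diag_valid[OF assms, of a b] c ab by auto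
  qed
  then show ?thesis by (rule finite_subset) auto
qed

lemma swap_diag:
  assumes d: "is_diagram n D" and c: "(s,e0) \<in> D" and c2: "(t,e') \<in> D" and st: "s < t" and te: "t < e0"
  shows "is_diagram n (D - {(s,e0),(t,e')} \<union> {(t,e0),(s,e')})"
proof -
  note v = diag_valid[OF d]
  have ne: "e' \<noteq> e0" using diag_unique[OF d c c2, of e0] st by auto
  have tp: "t < e'" "s < e'" using v(1)[OF c2] st by auto
  let ?D = "D - {(s,e0),(t,e')} \<union> {(t,e0),(s,e')}"
  have A: "\<forall>c\<in>?D. fst c < snd c \<and> fst c \<in> {1..2*n} \<and> snd c \<in> {1..2*n}"
    using v[OF c] v[OF c2] v st te tp by fastforce
  have B: "\<exists>!c\<in>?D. p = fst c \<or> p = snd c" if p: "p \<in> {1..2*n}" for p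
  proof -
    obtain a b where ab: "(a,b) \<in> D" "p = a \<or> p = b" using diag_cover[OF d p] by blast
    have ex: "\<exists>c\<in>?D. p = fst c \<or> p = snd c"
    proof (cases "(a,b) = (s,e0) \<or> (a,b) = (t,e')")
      case True then show ?thesis using ab by auto
    next
      case False then show ?thesis using ab by (intro bexI[of _ "(a,b)"]) auto
    qed
    have un: "c1 = c2" if "c1 \<in> ?D" "c2 \<in> ?D" "p = fst c1 \<or> p = snd c1" "p = fst c2 \<or> p = snd c2" for c1 c2
    proof -
      have g: "c \<in> D \<or> c = (t,e0) \<or> c = (s,e')" if "c \<in> ?D" for c using that by auto
      have o: "c \<noteq> (s,e0) \<and> c \<noteq> (t,e')" if "c \<in> ?D" "c \<in> D" for c using that st tp te ne by auto
      show ?thesis using g[OF that(1)] g[OF that(2)]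
      proof (elim disjE)
        assume "c1 \<in> D" "c2 \<in> D" then show ?thesis using diag_unique[OF d _ _ that(3,4)] by blast
      next
        assume h: "c1 \<in> D" "c2 = (t,e0)"
        then show ?thesis using o[OF that(1) h(1)] that(3,4) diag_unique[OF d h(1) c2, of p] diag_unique[OF d h(1) c, of p] by auto
      next
        assume h: "c1 \<in> D" "c2 = (s,e')"
        then show ?thesis using o[OF that(1) h(1)] that(3,4) diag_unique[OF d h(1) c2, of p] diag_unique[OF d h(1) c, of p] by auto
      next
        assume h: "c2 \<in> D" "c1 = (t,e0)"
        then show ?thesis using o[OF that(2) h(1)] that(3,4) diag_unique[OF d h(1) c2, of p] diag_unique[OF d h(1) c, of p] by auto
      next
        assume h: "c2 \<in> D" "c1 = (s,e')"
        then show ?thesis using o[OF that(2) h(1)] that(3,4) diag_unique[OF d h(1) c2, of p] diag_unique[OF d h(1) c, of p] by auto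
      qed (use that(3,4) st te tp ne in auto)
    qed
    show ?thesis using ex un by blast
  qed
  have B': "\<forall>p\<in>{1..2*n}. \<exists>!c\<in>?D. p = fst c \<or> p = snd c" using B by blast
  show ?thesis unfolding is_diagram_def by (rule conjI[OF A B'])
qed

definition inv :: "nat \<Rightarrow> nat \<Rightarrow> diagram \<Rightarrow> diagram \<Rightarrow> bool" where
  "inv n k C D \<longleftrightarrow> is_diagram n D \<and>
     (\<exists>s. (s, 2*n-k+1) \<in> D \<and> (\<forall>(a,b)\<in>D. b \<noteq> 2*n-k+1 \<longrightarrow> k \<le> b - a \<and> (a < s \<longrightarrow> 2*n-k+1 < b \<longrightarrow> k+1 \<le> b - a))) \<and>
     (\<forall>(a,b)\<in>D. b \<in> S_ends n k C \<longrightarrow> a \<le> k) \<and>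
     (\<forall>(a,b)\<in>D. b \<notin> S_ends n k C \<longrightarrow> (a,b) \<in> C)"

lemma inv_init:
  assumes "0 < k" "n \<ge> k" "n > 3 * (n - k)" "C \<in> K k n"
  shows "inv n k C C \<and> 2*n-k+1 \<in> S_ends n k C"
proof -
  have d: "is_diagram n C" and len: "\<And>a b. (a,b) \<in> C \<Longrightarrow> k \<le> b - a" using assms(4) unfolding K_def by auto
  note v = diag_valid[OF d]
  define e0 where "e0 = 2*n-k+1"
  have "e0 \<in> {1..2*n}" using assms unfolding e0_def by auto
  then obtain a b where ab: "(a,b) \<in> C" "e0 = a \<or> e0 = b" using diag_cover[OF d] by blast
  have "b = e0" using ab v[OF ab(1)] len[OF ab(1)] assms unfolding e0_def by auto
  with ab have c: "(a,e0) \<in> C" by simp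
  have "a \<le> k" using len[OF c] assms unfolding e0_def by auto
  then have S: "e0 \<in> S_ends n k C" using c unfolding S_ends_def Mset_def e0_def by auto
  have I1: "\<forall>(x,y)\<in>C. y \<noteq> e0 \<longrightarrow> k \<le> y - x \<and> (x < a \<longrightarrow> e0 < y \<longrightarrow> k+1 \<le> y - x)"
  proof (clarify)
    fix x y assume xy: "(x,y) \<in> C" "y \<noteq> e0"
    show "k \<le> y - x \<and> (x < a \<longrightarrow> e0 < y \<longrightarrow> k+1 \<le> y - x)"
      using len[OF c] len[OF xy(1)] assms(1) by auto
  qed
  have I2: "\<forall>(x,y)\<in>C. y \<in> S_ends n k C \<longrightarrow> x \<le> k"
  proof (clarify)
    fix x y assume xy: "(x,y) \<in> C" "y \<in> S_ends n k C"
    then obtain x' where x': "(x',y) \<in> C" "x' \<notin> Mset n k" "y \<notin> Mset n k" unfolding S_ends_def by auto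
    have "x' = x" using diag_unique[OF d xy(1) x'(1), of y] by auto
    then show "x \<le> k" using x' len[OF xy(1)] v[OF xy(1)] unfolding Mset_def by auto
  qed
  have "inv n k C C" unfolding inv_def e0_def[symmetric]
  proof (intro conjI)
    show "\<exists>s. (s, e0) \<in> C \<and> (\<forall>(x,y)\<in>C. y \<noteq> e0 \<longrightarrow> k \<le> y - x \<and> (x < s \<longrightarrow> e0 < y \<longrightarrow> k+1 \<le> y - x))"
      using c I1 by (intro exI[of _ a] conjI)
  qed (use d I2 in auto)
  then show ?thesis using S unfolding e0_def by simp
qed

lemma inv_step:
  assumes k: "0 < k" "n \<ge> k" "n > 3 * (n - k)" and S: "2*n-k+1 \<in> S_ends n k C"
    and I: "inv n k C D"
  shows "inv n k C (swap_step n k C D)"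
proof -
  define e0 where "e0 = 2*n-k+1"
  have ke0: "k < e0" using k unfolding e0_def by auto
  have d: "is_diagram n D" using I unfolding inv_def by blast
  obtain s where c: "(s,e0) \<in> D" and L: "\<forall>(a,b)\<in>D. b \<noteq> e0 \<longrightarrow> k \<le> b - a \<and> (a < s \<longrightarrow> e0 < b \<longrightarrow> k+1 \<le> b - a)"
    using I unfolding inv_def e0_def by blast
  have E: "\<forall>(a,b)\<in>D. b \<in> S_ends n k C \<longrightarrow> a \<le> k" and F: "\<forall>(a,b)\<in>D. b \<notin> S_ends n k C \<longrightarrow> (a,b) \<in> C"
    using I unfolding inv_def by blast+
  have S': "e0 \<in> S_ends n k C" using S unfolding e0_def .
  have theS: "(THE s. (s, e0) \<in> D) = s"
  proof (rule the_equality)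
    fix x assume h: "(x,e0) \<in> D" then show "x = s" using diag_unique[OF d h c, of e0] by simp
  qed (rule c)
  define cands where "cands = {t. \<exists>e'. (t, e') \<in> D \<and> e' \<in> S_ends n k C \<and> s < t}"
  have sw: "swap_step n k C D = (if cands = {} then D else
      (let t = Min cands; e' = (THE e'. (t, e') \<in> D) in (D - {(s, e0), (t, e')}) \<union> {(t, e0), (s, e')}))"
    unfolding swap_step_def Let_def e0_def[symmetric] theS cands_def ..
  show ?thesis
  proof (cases "cands = {}")
    case True then show ?thesis using sw I by simp
  next
    case False
    have fin: "finite cands"
    proof (rule finite_subset)
      show "cands \<subseteq> fst ` D" unfolding cands_def by force
      show "finite (fst ` D)" using diag_finite[OF d] by simp
    qed
    define t where "t = Min cands"
    have tc: "t \<in> cands" using Min_in[OF fin False] unfolding t_def .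
    have tmin: "\<And>x. x \<in> cands \<Longrightarrow> t \<le> x" using Min_le[OF fin] unfolding t_def by blast
    obtain e' where c2: "(t,e') \<in> D" and e'S: "e' \<in> S_ends n k C" and st: "s < t" using tc unfolding cands_def by blast
    have theE: "(THE e'. (t, e') \<in> D) = e'"
    proof (rule the_equality)
      fix x assume h: "(t,x) \<in> D" then show "x = e'" using diag_unique[OF d h c2, of t] by simp
    qed (rule c2)
    have sw': "swap_step n k C D = D - {(s,e0),(t,e')} \<union> {(t,e0),(s,e')}"
      using sw False unfolding t_def[symmetric] theE by (simp add: Let_def theE)
    have tk: "t \<le> k" using E c2 e'S by blast
    have sk: "s \<le> k" using E c S' by blast
    have ne: "e' \<noteq> e0" using diag_unique[OF d c c2, of e0] st by auto
    have te: "t < e0" using tk ke0 by simp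
    have lt: "k \<le> e' - t" using L c2 ne by blast
    have lt2: "t < e'" using diag_valid[OF d c2] by simp
    let ?D = "D - {(s,e0),(t,e')} \<union> {(t,e0),(s,e')}"
    have d': "is_diagram n ?D" by (rule swap_diag[OF d c c2 st te])
    have L': "\<forall>(a,b)\<in>?D. b \<noteq> e0 \<longrightarrow> k \<le> b - a \<and> (a < t \<longrightarrow> e0 < b \<longrightarrow> k+1 \<le> b - a)"
    proof (clarify)
      fix a b assume ab: "(a,b) \<in> ?D" "b \<noteq> e0"
      show "k \<le> b - a \<and> (a < t \<longrightarrow> e0 < b \<longrightarrow> k+1 \<le> b - a)"
      proof (cases "(a,b) = (s,e')")
        case True then show ?thesis using lt lt2 st by auto
      next
        case False
        with ab have abD: "(a,b) \<in> D" and abn: "(a,b) \<noteq> (s,e0)" "(a,b) \<noteq> (t,e')" by auto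
        have "k \<le> b - a" using L abD ab(2) by blast
        moreover have "k+1 \<le> b - a" if at: "a < t" and eb: "e0 < b"
        proof -
          consider "a < s" | "a = s" | "s < a" by linarith
          then show ?thesis
          proof cases
            case 1 then show ?thesis using L abD ab(2) eb by blast
          next
            case 2 then show ?thesis using diag_unique[OF d abD c, of s] abn by auto
          next
            case 3
            show ?thesis
            proof (cases "b \<in> S_ends n k C")
              case True
              then have "a \<in> cands" unfolding cands_def using abD 3 by blast
              then show ?thesis using tmin at by force
            next
              case bS: False
              then have abC: "(a,b) \<in> C" using F abD by blast
              have "b \<notin> Mset n k" using eb unfolding Mset_def e0_def by auto
              then have "a \<in> Mset n k" using bS abC unfolding S_ends_def by blast
              then have "k + 1 \<le> a" unfolding Mset_def by auto
              then show ?thesis using at tk by auto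
            qed
          qed
        qed
        ultimately show ?thesis by blast
      qed
    qed
    have E': "\<forall>(a,b)\<in>?D. b \<in> S_ends n k C \<longrightarrow> a \<le> k" using E tk sk by auto
    have F': "\<forall>(a,b)\<in>?D. b \<notin> S_ends n k C \<longrightarrow> (a,b) \<in> C" using F S' e'S by auto
    have "inv n k C ?D" unfolding inv_def e0_def[symmetric]
    proof (intro conjI)
      show "\<exists>s. (s, e0) \<in> ?D \<and> (\<forall>(a,b)\<in>?D. b \<noteq> e0 \<longrightarrow> k \<le> b - a \<and> (a < s \<longrightarrow> e0 < b \<longrightarrow> k+1 \<le> b - a))"
        using L' by (intro exI[of _ t] conjI) auto
    qed (fact d' E' F')+
    then show ?thesis using sw' by simp
  qed
qed

lemma inv_iter:
  assumes k: "0 < k" "n \<ge> k" "n > 3 * (n - k)" and S: "2*n-k+1 \<in> S_ends n k C"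
    and I: "inv n k C C"
  shows "inv n k C ((swap_step n k C ^^ m) C)"
  by (induction m) (auto intro: inv_step[OF k S] I)

definition rr :: "nat \<Rightarrow> nat \<Rightarrow> nat \<Rightarrow> nat" where
  "rr s e0 p = p - (if s < p then 1 else 0) - (if e0 < p then 1 else 0)"

lemma rr_range:
  assumes "s < e0" "e0 \<le> 2*N" "1 \<le> s" "x \<in> {1..2*N}" "x \<noteq> s" "x \<noteq> e0"
  shows "rr s e0 x \<in> {1..2*N-2}"
  using assms unfolding rr_def by auto

lemma rr_mono:
  assumes "x < y" "x \<noteq> s" "x \<noteq> e0" "y \<noteq> s" "y \<noteq> e0" "s < e0"
  shows "rr s e0 x < rr s e0 y"
  using assms unfolding rr_def by auto

lemma rr_inj:
  assumes "x \<noteq> s" "x \<noteq> e0" "y \<noteq> s" "y \<noteq> e0" "s < e0" "rr s e0 x = rr s e0 y"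
  shows "x = y"
  using rr_mono[of x y s e0] rr_mono[of y x s e0] assms by (metis less_irrefl nat_neq_iff)

lemma rr_surj:
  assumes "s < e0" "e0 \<le> 2*N" "1 \<le> s" "p \<in> {1..2*N-2}"
  shows "\<exists>x\<in>{1..2*N}. x \<noteq> s \<and> x \<noteq> e0 \<and> rr s e0 x = p"
proof (cases "p < s")
  case True then show ?thesis using assms by (intro bexI[of _ p]) (auto simp: rr_def)
next
  case F1: False
  show ?thesis
  proof (cases "p + 1 < e0")
    case True then show ?thesis using assms F1 by (intro bexI[of _ "p+1"]) (auto simp: rr_def)
  next
    case False then show ?thesis using assms F1 by (intro bexI[of _ "p+2"]) (auto simp: rr_def)
  qed
qed

lemma rr_len:
  assumes "x < y" "x \<noteq> s" "x \<noteq> e0" "y \<noteq> s" "y \<noteq> e0" "s < e0"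
    "k \<le> y - x" "x < s \<longrightarrow> e0 < y \<longrightarrow> k+1 \<le> y - x"
  shows "k - 1 \<le> rr s e0 y - rr s e0 x"
  using assms unfolding rr_def by auto

theorem lemma5:
  fixes n k :: nat and C :: diagram
  assumes "0 < n" and "0 < k" and "n \<ge> k" and "n > 3 * (n - k)"
    and "C \<in> K k n"
  shows "beta n k C \<in> K (k - 1) (n - 1)"
proof -
  have k: "0 < k" "n \<ge> k" "n > 3 * (n - k)" using assms by auto
  have init: "inv n k C C" "2*n-k+1 \<in> S_ends n k C" using inv_init[OF k assms(5)] by auto
  define e0 where "e0 = 2*n-k+1"
  define D where "D = (swap_step n k C ^^ (2*n)) C"
  have I: "inv n k C D" unfolding D_def by (rule inv_iter[OF k init(2) init(1)])
  have d: "is_diagram n D" using I unfolding inv_def by blast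
  obtain s where c: "(s,e0) \<in> D" and L: "\<forall>(a,b)\<in>D. b \<noteq> e0 \<longrightarrow> k \<le> b - a \<and> (a < s \<longrightarrow> e0 < b \<longrightarrow> k+1 \<le> b - a)"
    using I unfolding inv_def e0_def by blast
  have theS: "(THE s. (s, e0) \<in> D) = s"
  proof (rule the_equality)
    fix x assume h: "(x,e0) \<in> D" then show "x = s" using diag_unique[OF d h c, of e0] by simp
  qed (rule c)
  have se: "s < e0" "1 \<le> s" "e0 \<le> 2*n" using diag_valid[OF d c] by auto
  define f where "f = (\<lambda>(a::nat, b::nat). (rr s e0 a, rr s e0 b))"
  have beq: "beta n k C = f ` (D - {(s,e0)})"
    unfolding beta_def Let_def e0_def[symmetric] D_def[symmetric] theS f_def rr_def ..
  have N: "2*(n-1) = 2*n-2" by arith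
  have pts: "a \<noteq> s \<and> a \<noteq> e0 \<and> b \<noteq> s \<and> b \<noteq> e0 \<and> a < b \<and> a \<in> {1..2*n} \<and> b \<in> {1..2*n}"
    if ab: "(a,b) \<in> D" "(a,b) \<noteq> (s,e0)" for a b
  proof -
    have v: "a < b" "1 \<le> a" "b \<le> 2*n" using diag_valid[OF d ab(1)] by auto
    have u: "a = fst (a,b) \<or> a = snd (a,b)" "b = fst (a,b) \<or> b = snd (a,b)" by auto
    have w1: "a = s \<or> a = e0 \<Longrightarrow> False" using diag_unique[OF d ab(1) c u(1)] ab(2) by simp
    have w2: "b = s \<or> b = e0 \<Longrightarrow> False" using diag_unique[OF d ab(1) c u(2)] ab(2) by simp
    have "a \<noteq> s" "a \<noteq> e0" "b \<noteq> s" "b \<noteq> e0" using w1 w2 by blast+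
    moreover note v
    ultimately show ?thesis by simp
  qed
  have A: "\<forall>c\<in>f ` (D - {(s,e0)}). fst c < snd c \<and> fst c \<in> {1..2*(n-1)} \<and> snd c \<in> {1..2*(n-1)}"
  proof
    fix c assume "c \<in> f ` (D - {(s,e0)})"
    then obtain a b where ab: "(a,b) \<in> D" "(a,b) \<noteq> (s,e0)" and cf: "c = (rr s e0 a, rr s e0 b)"
      unfolding f_def by auto
    note p = pts[OF ab]
    show "fst c < snd c \<and> fst c \<in> {1..2*(n-1)} \<and> snd c \<in> {1..2*(n-1)}"
      unfolding cf N using rr_mono[of a b s e0] rr_range[OF se(1) se(3) se(2), of a] rr_range[OF se(1) se(3) se(2), of b] p se by auto
  qed
  have B: "\<exists>!c\<in>f ` (D - {(s,e0)}). p = fst c \<or> p = snd c" if p: "p \<in> {1..2*(n-1)}" for p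
  proof -
    obtain x where x: "x \<in> {1..2*n}" "x \<noteq> s" "x \<noteq> e0" "rr s e0 x = p"
      using rr_surj[OF se(1) se(3) se(2)] p N by metis
    obtain a b where ab: "(a,b) \<in> D" "x = a \<or> x = b" using diag_cover[OF d x(1)] by blast
    have abn: "(a,b) \<noteq> (s,e0)" using ab x by auto
    have ex: "\<exists>c\<in>f ` (D - {(s,e0)}). p = fst c \<or> p = snd c"
      using ab abn x(4) unfolding f_def by (intro bexI[of _ "(rr s e0 a, rr s e0 b)"]) auto
    have un: "c1 = c2" if c12: "c1 \<in> f ` (D - {(s,e0)})" "c2 \<in> f ` (D - {(s,e0)})"
      "p = fst c1 \<or> p = snd c1" "p = fst c2 \<or> p = snd c2" for c1 c2
    proof -
      obtain a1 b1 where ab1: "(a1,b1) \<in> D" "(a1,b1) \<noteq> (s,e0)" and cf1: "c1 = (rr s e0 a1, rr s e0 b1)"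
        using c12(1) unfolding f_def by auto
      obtain a2 b2 where ab2: "(a2,b2) \<in> D" "(a2,b2) \<noteq> (s,e0)" and cf2: "c2 = (rr s e0 a2, rr s e0 b2)"
        using c12(2) unfolding f_def by auto
      obtain x1 where x1: "x1 = a1 \<or> x1 = b1" "rr s e0 x1 = p" using c12(3) cf1 by auto
      obtain x2 where x2: "x2 = a2 \<or> x2 = b2" "rr s e0 x2 = p" using c12(4) cf2 by auto
      have "x1 \<noteq> s" "x1 \<noteq> e0" using pts[OF ab1] x1(1) by auto
      moreover have "x2 \<noteq> s" "x2 \<noteq> e0" using pts[OF ab2] x2(1) by auto
      ultimately have "x1 = x2" using rr_inj[of x1 s e0 x2] x1(2) x2(2) se(1) by auto
      then have "(a1,b1) = (a2,b2)" using diag_unique[OF d ab1(1) ab2(1), of x1] x1(1) x2(1) by auto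
      then show ?thesis using cf1 cf2 by simp
    qed
    show ?thesis using ex un by blast
  qed
  have B': "\<forall>p\<in>{1..2*(n-1)}. \<exists>!c\<in>f ` (D - {(s,e0)}). p = fst c \<or> p = snd c" using B by blast
  have diag: "is_diagram (n-1) (f ` (D - {(s,e0)}))" unfolding is_diagram_def by (rule conjI[OF A B'])
  have len: "\<forall>c\<in>f ` (D - {(s,e0)}). snd c - fst c \<ge> k - 1"
  proof
    fix c assume "c \<in> f ` (D - {(s,e0)})"
    then obtain a b where ab: "(a,b) \<in> D" "(a,b) \<noteq> (s,e0)" and cf: "c = (rr s e0 a, rr s e0 b)"
      unfolding f_def by auto
    note p = pts[OF ab]
    have "k \<le> b - a \<and> (a < s \<longrightarrow> e0 < b \<longrightarrow> k+1 \<le> b - a)" using L ab(1) p by blast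
    then show "snd c - fst c \<ge> k - 1" unfolding cf using rr_len[of a b s e0 k] p se by auto
  qed
  show ?thesis unfolding beq K_def using diag len by blast
qed

end
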